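(* Let $R$ be a regular run and let $\alpha>0$ be a moment such that SafeToOpen fails at $\alpha-$ and holds at $\alpha$. Let $\beta=\sup\{t\ge\alpha:\ \text{SafeToOpen holds over }[\alpha,t]\}\in(\alpha,\infty]$. Then (1) Dir = close at $\alpha$; (2) Dir = open over $(\alpha,\beta]$ (over $(\alpha,\infty)$ if $\beta=\infty$) and, if $\beta<\infty$, also at $\beta+$.
   Context: Setting (evolving algebra for the railroad crossing). States are structures over a vocabulary containing: a finite universe Tracks; the reals and ExtendedReals $=\mathbb{R}\cup\{\infty\}$ with standard $<$ and $+$ ($\infty$ largest); a nullary real-valued symbol $\mathrm{CT}$ (current time); positive real constants $d_{close},d_{open},d_{min},d_{max}$ with $d_{close}<d_{min}\le d_{max}$; a unary function TrackStatus from Tracks to $\{\text{empty},\text{coming},\text{incrossing}\}$; a unary function Deadline from Tracks to ExtendedReals; a nullary Dir with values in $\{\text{open},\text{close}\}$; a nullary GateStatus with values in $\{\text{opened},\text{closed}\}$. Put $W=d_{min}-d_{close}$ and $\Delta_{close}=d_{close}+(d_{max}-d_{min})=d_{max}-W$. For a track $x$, $s(x)$ is the condition [$\mathrm{TrackStatus}(x)=\text{empty}$ or $\mathrm{CT}+d_{open}<\mathrm{Deadline}(x)$], and SafeToOpen is $\forall x\in\mathrm{Tracks}\ s(x)$. The program has two modules (agents). Gate: simultaneously OpenGate "if Dir=open then GateStatus:=opened" and CloseGate "if Dir=close then GateStatus:=closed". Controller: simultaneously, for every track $x$, SetDeadline$(x)$ "if TrackStatus$(x)$=coming and Deadline$(x)=\infty$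 then Deadline$(x):=\mathrm{CT}+W$", SignalClose$(x)$ "if $\mathrm{CT}=$Deadline$(x)$ then Dir:=close", ClearDeadline$(x)$ "if TrackStatus$(x)$=empty and Deadline$(x)<\infty$ then Deadline$(x):=\infty$", together with SignalOpen "if Dir=close and SafeToOpen then Dir:=open". Executing a module means computing all updates it generates in the current state and performing them simultaneously (nothing happens if the update set is inconsistent). A module is enabled at a state if its update set is consistent and contains an update that changes the state. TrackStatus is external (changed only by the environment); Deadline, Dir, GateStatus are internal (changed only by the modules); other symbols are static. Runs: for $t\mapsto R(t)$, $t\in[0,\infty)$, let $\rho(t)$ be the reduct of $R(t)$ without CT. $R$ is a pre-run if all $R(t)$ share a superuniverse, $\mathrm{CT}=t$ in $R(t)$, and for every $\tau>0$ there are $0=t_0<\dots<t_n=\tau$ with $\rho$ constant on each $(t_i,t_{i+1})$. For a term $e$ (free variables fixed), $e_t$ is its value in $R(t)$, $e_{t+}$ (resp. $e_{t-}$, $t>0$) its constant value on some $(t,t+\epsilon)$ (resp. $(t-\epsilon,t)$); likewise $\rho(t\pm)$. $e$ holds over an interval if it holds at each point; $e$ becomes (is set to) $a$ at $t$ if $e_{t-}\ne a=e_t$ or $e_t\neq a=e_{t+}$. A pre-run is a run if (i) whenever $\rho(t+)\neq\rho(t)$, $\rho(t+)$ is the CT-free reduct of the result of executing some modules at $R(t)$ (these agents fire at $t$), with external functions equal in $\rho(t)$ and $\rho(t+)$; (ii) whenever $t>0$ and $\rho(t)\ne\rho(t-)$, they differ only in external functions. An agent is immediate if it fires at every moment it is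 enabled; bounded if immediate or there is $b>0$ with no interval $(t,t+b)$ over which it is enabled but never fires. Initial states: TrackStatus$(x)$=empty and Deadline$(x)=\infty$ for every track $x$. A regular run is a run $R$ with $R(0)$ initial such that: (Train Motion) for each track $x$ there is a finite or infinite sequence $0=t_0<t_1<t_2<\cdots$ (the significant moments of $x$) with TrackStatus$(x)$=empty over each $[t_{3i},t_{3i+1})$, =coming over each $[t_{3i+1},t_{3i+2})$ where $d_{min}\le t_{3i+2}-t_{3i+1}\le d_{max}$, =incrossing over each $[t_{3i+2},t_{3i+3})$, and, if the sequence is finite with last element $t_k$, then $3\mid k$ and TrackStatus$(x)$=empty over $[t_k,\infty)$; (Controller Timing) Controller is immediate; (Gate Timing) Gate is bounded, there is no interval $(t,t+d_{close})$ over which Dir=close and GateStatus=opened both hold, and no interval $(t,t+d_{open})$ over which Dir=open and GateStatus=closed both hold. *)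

theory Defs
  imports "HOL-Analysis.Analysis" "HOL-Library.Extended_Real"
begin

datatype tstat = Empty | Coming | Incrossing
datatype dir = Open | Close
datatype gstat = Opened | Closed

text \<open>CT-free part of a state; Tracks is the finite type 'tr.
  ExtendedReals are represented by ereal (only reals and \<infinity> ever occur).\<close>
record 'tr state =
  TrackStatus :: "'tr \<Rightarrow> tstat"
  Deadline    :: "'tr \<Rightarrow> ereal"
  DirV        :: dir
  GateStatus  :: gstat

datatype 'tr upd = UDL 'tr ereal | UDir dir | UGS gstat
datatype 'tr loc = LDL 'tr | LDir | LGS

fun loc_of :: "'tr upd \<Rightarrow> 'tr loc" where
  "loc_of (UDL x v) = LDL x"
| "loc_of (UDir d) = LDir"
| "loc_of (UGS g) = LGS"

definition consistent :: "'tr upd set \<Rightarrow> bool" where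
  "consistent U \<longleftrightarrow> (\<forall>u\<in>U. \<forall>v\<in>U. loc_of u = loc_of v \<longrightarrow> u = v)"

definition apply_upd :: "'tr upd set \<Rightarrow> 'tr state \<Rightarrow> 'tr state" where
  "apply_upd U s = s\<lparr>
     Deadline := (\<lambda>x. if \<exists>v. UDL x v \<in> U then (THE v. UDL x v \<in> U) else Deadline s x),
     DirV := (if \<exists>d. UDir d \<in> U then (THE d. UDir d \<in> U) else DirV s),
     GateStatus := (if \<exists>g. UGS g \<in> U then (THE g. UGS g \<in> U) else GateStatus s)\<rparr>"

fun changes :: "'tr upd \<Rightarrow> 'tr state \<Rightarrow> bool" where
  "changes (UDL x v) s = (Deadline s x \<noteq> v)"
| "changes (UDir d) s = (DirV s \<noteq> d)"
| "changes (UGS g) s = (GateStatus s \<noteq> g)"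

text \<open>s(x) and SafeToOpen, evaluated at current time ct.\<close>
definition safe_track :: "real \<Rightarrow> real \<Rightarrow> 'tr state \<Rightarrow> 'tr \<Rightarrow> bool" where
  "safe_track d_open ct s x \<longleftrightarrow>
     TrackStatus s x = Empty \<or> ereal (ct + d_open) < Deadline s x"

definition SafeToOpen :: "real \<Rightarrow> real \<Rightarrow> ('tr::finite) state \<Rightarrow> bool" where
  "SafeToOpen d_open ct s \<longleftrightarrow> (\<forall>x. safe_track d_open ct s x)"

datatype agent = Gate | Controller

text \<open>Update sets generated by the modules in state (CT = ct, s).
  W = d_min - d_close.\<close>
definition gate_updates :: "('tr::finite) state \<Rightarrow> 'tr upd set" where
  "gate_updates s =
     {UGS Opened | _::unit. DirV s = Open} \<union> {UGS Closed | _::unit. DirV s = Close}"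

definition controller_updates ::
  "real \<Rightarrow> real \<Rightarrow> real \<Rightarrow> real \<Rightarrow> ('tr::finite) state \<Rightarrow> 'tr upd set" where
  "controller_updates d_close d_open d_min ct s =
     {UDL x (ereal (ct + (d_min - d_close))) | x.
        TrackStatus s x = Coming \<and> Deadline s x = \<infinity>}
   \<union> {UDir Close | x. ereal ct = Deadline s x}
   \<union> {UDL x \<infinity> | x. TrackStatus s x = Empty \<and> Deadline s x < \<infinity>}
   \<union> {UDir Open | _::unit. DirV s = Close \<and> SafeToOpen d_open ct s}"

definition module_updates ::
  "real \<Rightarrow> real \<Rightarrow> real \<Rightarrow> agent \<Rightarrow> real \<Rightarrow> ('tr::finite) state \<Rightarrow> 'tr upd set" where
  "module_updates d_close d_open d_min a ct s =
     (case a of Gate \<Rightarrow> gate_updates s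
      | Controller \<Rightarrow> controller_updates d_close d_open d_min ct s)"

text \<open>Executing a set of modules simultaneously: each module contributes its
  update set if it is consistent (nothing happens for an inconsistent module).
  The two modules update disjoint locations.\<close>
definition exec_modules ::
  "real \<Rightarrow> real \<Rightarrow> real \<Rightarrow> agent set \<Rightarrow> real \<Rightarrow> ('tr::finite) state \<Rightarrow> 'tr state" where
  "exec_modules d_close d_open d_min M ct s =
     apply_upd (\<Union>a\<in>M. if consistent (module_updates d_close d_open d_min a ct s)
                       then module_updates d_close d_open d_min a ct s else {}) s"

definition enabled ::
  "real \<Rightarrow> real \<Rightarrow> real \<Rightarrow> agent \<Rightarrow> real \<Rightarrow> ('tr::finite) state \<Rightarrow> bool" where
  "enabled d_close d_open d_min a ct s \<longleftrightarrow>
     consistent (module_updates d_close d_open d_min a ct s) \<and>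
     (\<exists>u\<in>module_updates d_close d_open d_min a ct s. changes u s)"

text \<open>A run is given by \<rho> (the CT-free reducts); R(t) is \<rho>(t) with CT = t.
  Only t \<ge> 0 is relevant.\<close>

definition prerun :: "(real \<Rightarrow> 'tr state) \<Rightarrow> bool" where
  "prerun \<rho> \<longleftrightarrow> (\<forall>\<tau>>0. \<exists>(ts::nat \<Rightarrow> real) n. ts 0 = 0 \<and> ts n = \<tau> \<and>
      (\<forall>i<n. ts i < ts (Suc i)) \<and>
      (\<forall>i<n. \<forall>u v. ts i < u \<and> u < ts (Suc i) \<and> ts i < v \<and> v < ts (Suc i) \<longrightarrow> \<rho> u = \<rho> v))"

text \<open>\<rho>(t+) and \<rho>(t-): the constant value on a right/left neighbourhood.\<close>
definition rlim :: "(real \<Rightarrow> 'a) \<Rightarrow> real \<Rightarrow> 'a" where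
  "rlim f t = (THE a. \<exists>\<epsilon>>0. \<forall>u. t < u \<and> u < t + \<epsilon> \<longrightarrow> f u = a)"

definition llim :: "(real \<Rightarrow> 'a) \<Rightarrow> real \<Rightarrow> 'a" where
  "llim f t = (THE a. \<exists>\<epsilon>>0. \<forall>u. t - \<epsilon> < u \<and> u < t \<longrightarrow> f u = a)"

definition only_external_differ :: "'tr state \<Rightarrow> 'tr state \<Rightarrow> bool" where
  "only_external_differ s s' \<longleftrightarrow>
     Deadline s = Deadline s' \<and> DirV s = DirV s' \<and> GateStatus s = GateStatus s'"

definition is_run ::
  "real \<Rightarrow> real \<Rightarrow> real \<Rightarrow> (real \<Rightarrow> ('tr::finite) state) \<Rightarrow> bool" where
  "is_run d_close d_open d_min \<rho> \<longleftrightarrow> prerun \<rho> \<and>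
     (\<forall>t\<ge>0. rlim \<rho> t \<noteq> \<rho> t \<longrightarrow>
        (\<exists>M. rlim \<rho> t = exec_modules d_close d_open d_min M t (\<rho> t)) \<and>
        TrackStatus (rlim \<rho> t) = TrackStatus (\<rho> t)) \<and>
     (\<forall>t>0. \<rho> t \<noteq> llim \<rho> t \<longrightarrow> only_external_differ (\<rho> t) (llim \<rho> t))"

definition fires ::
  "real \<Rightarrow> real \<Rightarrow> real \<Rightarrow> (real \<Rightarrow> ('tr::finite) state) \<Rightarrow> agent \<Rightarrow> real \<Rightarrow> bool" where
  "fires d_close d_open d_min \<rho> a t \<longleftrightarrow> rlim \<rho> t \<noteq> \<rho> t \<and>
     (\<exists>M. a \<in> M \<and> rlim \<rho> t = exec_modules d_close d_open d_min M t (\<rho> t))"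

definition immediate ::
  "real \<Rightarrow> real \<Rightarrow> real \<Rightarrow> (real \<Rightarrow> ('tr::finite) state) \<Rightarrow> agent \<Rightarrow> bool" where
  "immediate d_close d_open d_min \<rho> a \<longleftrightarrow>
     (\<forall>t\<ge>0. enabled d_close d_open d_min a t (\<rho> t) \<longrightarrow> fires d_close d_open d_min \<rho> a t)"

definition bounded_agent ::
  "real \<Rightarrow> real \<Rightarrow> real \<Rightarrow> (real \<Rightarrow> ('tr::finite) state) \<Rightarrow> agent \<Rightarrow> bool" where
  "bounded_agent d_close d_open d_min \<rho> a \<longleftrightarrow>
     immediate d_close d_open d_min \<rho> a \<or>
     (\<exists>b>0. \<not> (\<exists>t\<ge>0.
        (\<forall>u. t < u \<and> u < t + b \<longrightarrow> enabled d_close d_open d_min a u (\<rho> u)) \<and>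
        (\<forall>u. t < u \<and> u < t + b \<longrightarrow> \<not> fires d_close d_open d_min \<rho> a u)))"

definition initial_state :: "('tr::finite) state \<Rightarrow> bool" where
  "initial_state s \<longleftrightarrow> (\<forall>x. TrackStatus s x = Empty \<and> Deadline s x = \<infinity>)"

definition seg_ok ::
  "real \<Rightarrow> real \<Rightarrow> (real \<Rightarrow> 'tr state) \<Rightarrow> 'tr \<Rightarrow> (nat \<Rightarrow> real) \<Rightarrow> nat \<Rightarrow> bool" where
  "seg_ok d_min d_max \<rho> x ts i \<longleftrightarrow>
     (\<forall>u. ts (3*i) \<le> u \<and> u < ts (3*i+1) \<longrightarrow> TrackStatus (\<rho> u) x = Empty) \<and>
     (\<forall>u. ts (3*i+1) \<le> u \<and> u < ts (3*i+2) \<longrightarrow> TrackStatus (\<rho> u) x = Coming) \<and>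
     d_min \<le> ts (3*i+2) - ts (3*i+1) \<and> ts (3*i+2) - ts (3*i+1) \<le> d_max \<and>
     (\<forall>u. ts (3*i+2) \<le> u \<and> u < ts (3*i+3) \<longrightarrow> TrackStatus (\<rho> u) x = Incrossing)"

definition train_motion :: "real \<Rightarrow> real \<Rightarrow> (real \<Rightarrow> 'tr state) \<Rightarrow> bool" where
  "train_motion d_min d_max \<rho> \<longleftrightarrow> (\<forall>x. \<exists>ts::nat \<Rightarrow> real. ts 0 = 0 \<and>
     ((strict_mono ts \<and> (\<forall>i. seg_ok d_min d_max \<rho> x ts i))
      \<or> (\<exists>k. 3 dvd k \<and> (\<forall>i<k. ts i < ts (Suc i)) \<and>
             (\<forall>i. 3*i+3 \<le> k \<longrightarrow> seg_ok d_min d_max \<rho> x ts i) \<and>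
             (\<forall>u. ts k \<le> u \<longrightarrow> TrackStatus (\<rho> u) x = Empty))))"

definition regular_run ::
  "real \<Rightarrow> real \<Rightarrow> real \<Rightarrow> real \<Rightarrow> (real \<Rightarrow> ('tr::finite) state) \<Rightarrow> bool" where
  "regular_run d_close d_open d_min d_max \<rho> \<longleftrightarrow>
     is_run d_close d_open d_min \<rho> \<and> initial_state (\<rho> 0) \<and>
     train_motion d_min d_max \<rho> \<and>
     immediate d_close d_open d_min \<rho> Controller \<and>
     bounded_agent d_close d_open d_min \<rho> Gate \<and>
     \<not> (\<exists>t\<ge>0. \<forall>u. t < u \<and> u < t + d_close \<longrightarrow>
            DirV (\<rho> u) = Close \<and> GateStatus (\<rho> u) = Opened) \<and>
     \<not> (\<exists>t\<ge>0. \<forall>u. t < u \<and> u < t + d_open \<longrightarrow>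
            DirV (\<rho> u) = Open \<and> GateStatus (\<rho> u) = Closed)"

end

theory Submission imports Defs begin

lemma ctrl_cons:
  assumes "\<forall>y. ereal ct \<noteq> Deadline s y"
  shows "consistent (controller_updates dc dop dm ct s)"
  using assms unfolding consistent_def controller_updates_def
  by (auto)

lemma ctrl_incons:
  assumes "\<not> consistent (controller_updates dc dop dm ct s)"
  shows "DirV s = Close"
  using assms unfolding consistent_def controller_updates_def
  by (auto)

definition UU :: "real \<Rightarrow> real \<Rightarrow> real \<Rightarrow> agent set \<Rightarrow> real \<Rightarrow> ('tr::finite) state \<Rightarrow> 'tr upd set" where
  "UU dc dop dm M ct s = (\<Union>a\<in>M. if consistent (module_updates dc dop dm a ct s)
                       then module_updates dc dop dm a ct s else {})"

lemma exec_eq: "exec_modules dc dop dm M ct s = apply_upd (UU dc dop dm M ct s) s"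
  by (simp add: exec_modules_def UU_def)

lemma UU_dir:
  assumes "UDir d \<in> UU dc dop dm M ct s"
  shows "Controller \<in> M \<and> consistent (controller_updates dc dop dm ct s) \<and>
         UDir d \<in> controller_updates dc dop dm ct s"
proof -
  obtain a where a: "a \<in> M" "consistent (module_updates dc dop dm a ct s)"
     "UDir d \<in> module_updates dc dop dm a ct s"
    using assms unfolding UU_def by (auto split: if_splits)
  show ?thesis
  proof (cases a)
    case Gate then show ?thesis using a by (auto simp: module_updates_def gate_updates_def)
  next
    case Controller then show ?thesis using a by (auto simp: module_updates_def)
  qed
qed

lemma UU_dl:
  assumes "UDL y v \<in> UU dc dop dm M ct s"
  shows "Controller \<in> M \<and> consistent (controller_updates dc dop dm ct s) \<and>
         UDL y v \<in> controller_updates dc dop dm ct s"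
proof -
  obtain a where a: "a \<in> M" "consistent (module_updates dc dop dm a ct s)"
     "UDL y v \<in> module_updates dc dop dm a ct s"
    using assms unfolding UU_def by (auto split: if_splits)
  show ?thesis
  proof (cases a)
    case Gate then show ?thesis using a by (auto simp: module_updates_def gate_updates_def)
  next
    case Controller then show ?thesis using a by (auto simp: module_updates_def)
  qed
qed

lemma ctrl_in_UU:
  assumes "Controller \<in> M" "consistent (controller_updates dc dop dm ct s)"
    "u \<in> controller_updates dc dop dm ct s"
  shows "u \<in> UU dc dop dm M ct s"
  using assms unfolding UU_def module_updates_def by (auto intro!: bexI[of _ Controller])

lemma exec_ts: "TrackStatus (exec_modules dc dop dm M ct s) = TrackStatus s"
  by (simp add: exec_modules_def apply_upd_def)

lemma exec_dir:
  "DirV (exec_modules dc dop dm M ct s) = DirV s \<or>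
   (Controller \<in> M \<and> consistent (controller_updates dc dop dm ct s) \<and>
    UDir (DirV (exec_modules dc dop dm M ct s)) \<in> controller_updates dc dop dm ct s)"
proof (cases "\<exists>d. UDir d \<in> UU dc dop dm M ct s")
  case True
  then obtain d where d: "UDir d \<in> UU dc dop dm M ct s" by auto
  note h = UU_dir[OF d]
  have "(THE d. UDir d \<in> UU dc dop dm M ct s) = d"
  proof (rule the_equality)
    show "UDir d \<in> UU dc dop dm M ct s" by (rule d)
  next
    fix d' assume "UDir d' \<in> UU dc dop dm M ct s"
    from UU_dir[OF this] h show "d' = d" unfolding consistent_def by force
  qed
  then have "DirV (exec_modules dc dop dm M ct s) = d"
    using True by (simp add: exec_eq apply_upd_def)
  then show ?thesis using h by simp
next
  case False
  then show ?thesis by (simp add: exec_eq apply_upd_def)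
qed

lemma exec_dl:
  "Deadline (exec_modules dc dop dm M ct s) y = Deadline s y \<or>
   (Controller \<in> M \<and> consistent (controller_updates dc dop dm ct s) \<and>
    UDL y (Deadline (exec_modules dc dop dm M ct s) y) \<in> controller_updates dc dop dm ct s)"
proof (cases "\<exists>v. UDL y v \<in> UU dc dop dm M ct s")
  case True
  then obtain v where d: "UDL y v \<in> UU dc dop dm M ct s" by auto
  note h = UU_dl[OF d]
  have "(THE v. UDL y v \<in> UU dc dop dm M ct s) = v"
  proof (rule the_equality)
    show "UDL y v \<in> UU dc dop dm M ct s" by (rule d)
  next
    fix d' assume "UDL y d' \<in> UU dc dop dm M ct s"
    from UU_dl[OF this] h show "d' = v" unfolding consistent_def by force
  qed
  then have "Deadline (exec_modules dc dop dm M ct s) y = v"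
    using True by (simp add: exec_eq apply_upd_def)
  then show ?thesis using h by simp
next
  case False
  then show ?thesis by (simp add: exec_eq apply_upd_def)
qed

lemma exec_dir_ctrl:
  assumes "Controller \<in> M" "consistent (controller_updates dc dop dm ct s)"
    "UDir d \<in> controller_updates dc dop dm ct s"
  shows "DirV (exec_modules dc dop dm M ct s) = d"
proof -
  have "UDir d \<in> UU dc dop dm M ct s" using ctrl_in_UU[OF assms] .
  from exec_dir[of dc dop dm M ct s] show ?thesis
  proof
    assume "DirV (exec_modules dc dop dm M ct s) = DirV s"
    have "(THE d. UDir d \<in> UU dc dop dm M ct s) = d"
    proof (rule the_equality)
      show "UDir d \<in> UU dc dop dm M ct s" by fact
    next
      fix d' assume "UDir d' \<in> UU dc dop dm M ct s"
      from UU_dir[OF this] assms show "d' = d" unfolding consistent_def by force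
    qed
    then show ?thesis using \<open>UDir d \<in> UU dc dop dm M ct s\<close>
      by (auto simp add: exec_eq apply_upd_def)
  next
    assume "Controller \<in> M \<and> consistent (controller_updates dc dop dm ct s) \<and>
    UDir (DirV (exec_modules dc dop dm M ct s)) \<in> controller_updates dc dop dm ct s"
    then show ?thesis using assms unfolding consistent_def by force
  qed
qed

lemma locate_r: "f 0 \<le> (t::real) \<Longrightarrow> t < f n \<Longrightarrow> \<exists>i<n. f i \<le> t \<and> t < f (Suc i)"
proof (induction n)
  case 0 then show ?case by simp
next
  case (Suc n)
  show ?case
  proof (cases "f n \<le> t")
    case True then show ?thesis using Suc.prems by auto
  next
    case False then show ?thesis using Suc.IH Suc.prems by (auto simp: less_Suc_eq)
  qed
qed

lemma locate_l: "f 0 < (t::real) \<Longrightarrow> t \<le> f n \<Longrightarrow> \<exists>i<n. f i < t \<and> t \<le> f (Suc i)"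
proof (induction n)
  case 0 then show ?case by simp
next
  case (Suc n)
  show ?case
  proof (cases "f n < t")
    case True then show ?thesis using Suc.prems by auto
  next
    case False then show ?thesis using Suc.IH Suc.prems by (auto simp: less_Suc_eq)
  qed
qed

lemma rlim_eq:
  assumes "\<epsilon> > 0" "\<forall>u. t < u \<and> u < t + \<epsilon> \<longrightarrow> f u = a"
  shows "rlim f t = a"
  unfolding rlim_def
proof (rule the_equality)
  show "\<exists>\<epsilon>>0. \<forall>u. t < u \<and> u < t + \<epsilon> \<longrightarrow> f u = a" using assms by auto
next
  fix b assume "\<exists>\<epsilon>>0. \<forall>u. t < u \<and> u < t + \<epsilon> \<longrightarrow> f u = b"
  then obtain e where e: "e > 0" "\<forall>u. t < u \<and> u < t + e \<longrightarrow> f u = b" by auto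
  let ?u = "t + min e \<epsilon> / 2"
  have "f ?u = b" using e assms by (intro e(2)[rule_format]) auto
  moreover have "f ?u = a" using e assms by (intro assms(2)[rule_format]) auto
  ultimately show "b = a" by simp
qed

lemma llim_eq:
  assumes "\<epsilon> > 0" "\<forall>u. t - \<epsilon> < u \<and> u < t \<longrightarrow> f u = a"
  shows "llim f t = a"
  unfolding llim_def
proof (rule the_equality)
  show "\<exists>\<epsilon>>0. \<forall>u. t - \<epsilon> < u \<and> u < t \<longrightarrow> f u = a" using assms by auto
next
  fix b assume "\<exists>\<epsilon>>0. \<forall>u. t - \<epsilon> < u \<and> u < t \<longrightarrow> f u = b"
  then obtain e where e: "e > 0" "\<forall>u. t - e < u \<and> u < t \<longrightarrow> f u = b" by auto
  let ?u = "t - min e \<epsilon> / 2"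
  have "f ?u = b" using e assms by (intro e(2)[rule_format]) auto
  moreover have "f ?u = a" using e assms by (intro assms(2)[rule_format]) auto
  ultimately show "b = a" by simp
qed

lemma prerun_r:
  assumes "prerun \<rho>" "t \<ge> 0"
  shows "\<exists>\<epsilon>>0. \<forall>u. t < u \<and> u < t + \<epsilon> \<longrightarrow> \<rho> u = rlim \<rho> t"
proof -
  obtain ts :: "nat \<Rightarrow> real" and n where ts: "ts 0 = 0" "ts n = t + 1" "\<forall>i<n. ts i < ts (Suc i)"
    "\<forall>i<n. \<forall>u v. ts i < u \<and> u < ts (Suc i) \<and> ts i < v \<and> v < ts (Suc i) \<longrightarrow> \<rho> u = \<rho> v"
    using assms unfolding prerun_def by (metis add_nonneg_pos zero_less_one)
  obtain i where i: "i < n" "ts i \<le> t" "t < ts (Suc i)"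
    using locate_r[of ts t n] ts assms by auto
  define e where "e = ts (Suc i) - t"
  have e: "e > 0" using i e_def by simp
  define a where "a = \<rho> (t + e/2)"
  have c: "\<forall>u. t < u \<and> u < t + e \<longrightarrow> \<rho> u = a"
  proof (intro allI impI)
    fix u assume u: "t < u \<and> u < t + e"
    have m: "ts i < t + e/2 \<and> t + e/2 < ts (Suc i)" using i e e_def by (auto simp: field_simps)
    show "\<rho> u = a" unfolding a_def
      by (rule ts(4)[rule_format, OF i(1)]) (use u i m e_def in auto)
  qed
  have "rlim \<rho> t = a" using rlim_eq[OF e c] .
  then show ?thesis using e c by auto
qed

lemma prerun_l:
  assumes "prerun \<rho>" "t > 0"
  shows "\<exists>\<epsilon>>0. \<forall>u. t - \<epsilon> < u \<and> u < t \<longrightarrow> \<rho> u = llim \<rho> t"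
proof -
  obtain ts :: "nat \<Rightarrow> real" and n where ts: "ts 0 = 0" "ts n = t + 1" "\<forall>i<n. ts i < ts (Suc i)"
    "\<forall>i<n. \<forall>u v. ts i < u \<and> u < ts (Suc i) \<and> ts i < v \<and> v < ts (Suc i) \<longrightarrow> \<rho> u = \<rho> v"
    using assms unfolding prerun_def by (metis add_pos_pos zero_less_one)
  obtain i where i: "i < n" "ts i < t" "t \<le> ts (Suc i)"
    using locate_l[of ts t n] ts assms by auto
  define e where "e = t - ts i"
  have e: "e > 0" using i e_def by simp
  define a where "a = \<rho> (t - e/2)"
  have c: "\<forall>u. t - e < u \<and> u < t \<longrightarrow> \<rho> u = a"
  proof (intro allI impI)
    fix u assume u: "t - e < u \<and> u < t"
    have m: "ts i < t - e/2 \<and> t - e/2 < ts (Suc i)" using i e e_def by (auto simp: field_simps)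
    show "\<rho> u = a" unfolding a_def
      by (rule ts(4)[rule_format, OF i(1)]) (use u i m e_def in auto)
  qed
  have "llim \<rho> t = a" using llim_eq[OF e c] .
  then show ?thesis using e c by auto
qed

lemma interval_induct:
  fixes a b :: real
  assumes ab: "a \<le> b" and Pa: "P a"
    and R: "\<And>s. a \<le> s \<Longrightarrow> s < b \<Longrightarrow> P s \<Longrightarrow> \<exists>\<epsilon>>0. \<forall>u. s < u \<and> u < s + \<epsilon> \<longrightarrow> P u"
    and L: "\<And>s. a < s \<Longrightarrow> s \<le> b \<Longrightarrow> (\<exists>\<epsilon>>0. \<forall>u. s - \<epsilon> < u \<and> u < s \<longrightarrow> P u) \<Longrightarrow> P s"
  shows "\<forall>s. a \<le> s \<and> s \<le> b \<longrightarrow> P s"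
proof (rule ccontr)
  define F where "F = {s. a \<le> s \<and> s \<le> b \<and> \<not> P s}"
  assume "\<not> (\<forall>s. a \<le> s \<and> s \<le> b \<longrightarrow> P s)"
  then obtain s0 where s0: "s0 \<in> F" unfolding F_def by auto
  have bdd: "bdd_below F" unfolding F_def by (rule bdd_belowI[of _ a]) auto
  define \<sigma> where "\<sigma> = Inf F"
  have low: "\<And>s. s \<in> F \<Longrightarrow> \<sigma> \<le> s" unfolding \<sigma>_def using bdd by (simp add: cInf_lower)
  have ge: "a \<le> \<sigma>" unfolding \<sigma>_def using s0 by (intro cInf_greatest) (auto simp: F_def)
  have le: "\<sigma> \<le> b" using low[OF s0] s0 unfolding F_def by auto
  have below: "\<And>u. a \<le> u \<Longrightarrow> u < \<sigma> \<Longrightarrow> P u"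
  proof (rule ccontr)
    fix u assume u: "a \<le> u" "u < \<sigma>" "\<not> P u"
    then have "u \<in> F" using le unfolding F_def by auto
    then show False using low u by force
  qed
  show False
  proof (cases "P \<sigma>")
    case True
    have "\<sigma> < b"
    proof (rule ccontr)
      assume "\<not> \<sigma> < b"
      then have "\<sigma> = b" using le by simp
      then have "s0 = b" using low[OF s0] s0 unfolding F_def by auto
      then show False using s0 True \<open>\<sigma> = b\<close> unfolding F_def by auto
    qed
    then obtain e where e: "e > 0" "\<forall>u. \<sigma> < u \<and> u < \<sigma> + e \<longrightarrow> P u" using R[OF ge _ True] by auto
    have "\<sigma> + e \<le> \<sigma>" unfolding \<sigma>_def
    proof (rule cInf_greatest)
      show "F \<noteq> {}" using s0 by auto
    next
      fix s assume s: "s \<in> F"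
      have "\<sigma> \<le> s" using low[OF s] .
      moreover have "s \<noteq> \<sigma>" using s True unfolding F_def by auto
      moreover have "\<not> P s" using s unfolding F_def by auto
      ultimately show "Inf F + e \<le> s" using e unfolding \<sigma>_def by force
    qed
    then show False using e by simp
  next
    case False
    then have "\<sigma> \<noteq> a" using Pa by auto
    then have "a < \<sigma>" using ge by simp
    then have "P \<sigma>" using L[OF _ le] below by (intro L[OF _ le]) (auto intro!: exI[of _ "\<sigma> - a"])
    then show False using False by simp
  qed
qed

lemma seg_okD:
  assumes "seg_ok dm dM \<rho> x ts i"
  shows "\<And>u. ts (3*i) \<le> u \<Longrightarrow> u < ts (3*i+1) \<Longrightarrow> TrackStatus (\<rho> u) x = Empty"
    "\<And>u. ts (3*i+1) \<le> u \<Longrightarrow> u < ts (3*i+2) \<Longrightarrow> TrackStatus (\<rho> u) x = Coming"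
    "dm \<le> ts (3*i+2) - ts (3*i+1)"
    "\<And>u. ts (3*i+2) \<le> u \<Longrightarrow> u < ts (3*i+3) \<Longrightarrow> TrackStatus (\<rho> u) x = Incrossing"
  using assms unfolding seg_ok_def by auto

lemma tm_core:
  fixes ts :: "nat \<Rightarrow> real" and \<rho> :: "real \<Rightarrow> 'tr state"
  assumes dm: "0 < dm" and al: "0 < \<alpha>" and dl: "\<delta> > 0"
    and ne: "\<forall>u. \<alpha> - \<delta> < u \<and> u < \<alpha> \<longrightarrow> TrackStatus (\<rho> u) x \<noteq> Empty"
    and em: "TrackStatus (\<rho> \<alpha>) x = Empty"
    and t0: "ts 0 = 0"
    and mono: "\<forall>j<N. ts j < ts (Suc j)"
    and seg: "\<forall>i. 3*i+3 \<le> N \<longrightarrow> seg_ok dm dM \<rho> x ts i"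
    and mN: "m \<le> N" "ts m \<le> \<alpha>" "m < N \<longrightarrow> \<alpha> < ts (Suc m)" "m < N \<longrightarrow> 3*(m div 3)+3 \<le> N"
    and tail: "m = N \<longrightarrow> 3 dvd N \<and> (\<forall>u. ts N \<le> u \<longrightarrow> TrackStatus (\<rho> u) x = Empty)"
  shows "\<exists>a c. 0 \<le> a \<and> a < c \<and> c + dm \<le> \<alpha> \<and>
     (\<forall>u. a \<le> u \<and> u < c \<longrightarrow> TrackStatus (\<rho> u) x = Empty) \<and>
     (\<forall>u. c \<le> u \<and> u < \<alpha> \<longrightarrow> TrackStatus (\<rho> u) x \<noteq> Empty) \<and>
     TrackStatus (\<rho> c) x = Coming"
proof -
  have nonneg: "\<And>j. j \<le> N \<Longrightarrow> ts j \<ge> 0"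
  proof -
    fix j show "j \<le> N \<Longrightarrow> ts j \<ge> 0"
    proof (induction j)
      case 0 then show ?case using t0 by simp
    next
      case (Suc j)
      have "ts j \<ge> 0" using Suc by simp
      moreover have "ts j < ts (Suc j)" using mono Suc.prems by simp
      ultimately show ?case by simp
    qed
  qed
  define q where "q = m div 3"
  have qcases: "m = 3*q \<or> m = 3*q+1 \<or> m = 3*q+2" unfolding q_def by presburger
  have tsm: "ts m = \<alpha>"
  proof (rule ccontr)
    assume "ts m \<noteq> \<alpha>"
    then have lt: "ts m < \<alpha>" using mN by simp
    define u0 where "u0 = max (ts m) (\<alpha> - \<delta>/2)"
    have u0: "ts m \<le> u0" "u0 < \<alpha>" "\<alpha> - \<delta> < u0" unfolding u0_def using lt dl by auto
    have neu: "TrackStatus (\<rho> u0) x \<noteq> Empty" using ne u0 by auto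
    show False
    proof (cases "m = N")
      case True then show False using tail u0 neu by auto
    next
      case False
      then have mlt: "m < N" using mN by simp
      have sq: "seg_ok dm dM \<rho> x ts q" using seg mN(4) mlt unfolding q_def by auto
      have am: "\<alpha> < ts (Suc m)" using mN(3) mlt by simp
      from qcases show False
      proof (elim disjE)
        assume m: "m = 3*q"
        then show False using seg_okD(1)[OF sq, of u0] u0 am neu lt by (auto simp: m eval_nat_numeral)
      next
        assume m: "m = 3*q+1"
        then show False using seg_okD(2)[OF sq, of \<alpha>] am lt em by (auto simp: m eval_nat_numeral)
      next
        assume m: "m = 3*q+2"
        then show False using seg_okD(4)[OF sq, of \<alpha>] am lt em by (auto simp: m eval_nat_numeral)
      qed
    qed
  qed
  have m0: "m = 3*q"
  proof (cases "m = N")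
    case True then show ?thesis using tail unfolding q_def by auto
  next
    case False
    then have mlt: "m < N" using mN by simp
    have sq: "seg_ok dm dM \<rho> x ts q" using seg mN(4) mlt unfolding q_def by auto
    have am: "\<alpha> < ts (Suc m)" using mN(3) mlt by simp
    from qcases show ?thesis
    proof (elim disjE)
      assume m: "m = 3*q+1"
      then show ?thesis using seg_okD(2)[OF sq, of \<alpha>] am tsm em by (auto simp: m eval_nat_numeral)
    next
      assume m: "m = 3*q+2"
      then show ?thesis using seg_okD(4)[OF sq, of \<alpha>] am tsm em by (auto simp: m eval_nat_numeral)
    qed
  qed
  have "m \<noteq> 0" proof assume "m = 0" then show False using tsm t0 al by simp qed
  then have "q \<noteq> 0" using m0 by auto
  then obtain i where i: "m = 3*i+3" using m0 by (cases q) auto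
  have si: "seg_ok dm dM \<rho> x ts i" using seg mN(1) i by auto
  have a0: "ts (3*i) \<ge> 0" using nonneg mN(1) i by auto
  have m1: "ts (3*i) < ts (3*i+1)" using mono mN(1) i by auto
  have "3*i+2 < N" using i mN(1) by linarith
  then have m2: "ts (3*i+2) < ts (3*i+3)" using mono by (simp add: eval_nat_numeral)
  have d: "dm \<le> ts (3*i+2) - ts (3*i+1)" using seg_okD(3)[OF si] .
  show ?thesis
  proof (intro exI conjI allI impI)
    show "0 \<le> ts (3*i)" by fact
    show "ts (3*i) < ts (3*i+1)" by fact
    show "ts (3*i+1) + dm \<le> \<alpha>" using d m2 tsm i by auto
    show "TrackStatus (\<rho> u) x = Empty" if "ts (3*i) \<le> u \<and> u < ts (3*i+1)" for u
      using seg_okD(1)[OF si] that by auto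
    show "TrackStatus (\<rho> u) x \<noteq> Empty" if "ts (3*i+1) \<le> u \<and> u < \<alpha>" for u
    proof (cases "u < ts (3*i+2)")
      case True then show ?thesis using seg_okD(2)[OF si] that by auto
    next
      case False then show ?thesis using seg_okD(4)[OF si, of u] that tsm i by auto
    qed
    show "TrackStatus (\<rho> (ts (3*i+1))) x = Coming"
      using seg_okD(2)[OF si] d dm by auto
  qed
qed

locale RR =
  fixes dc dop dm :: real and \<rho> :: "real \<Rightarrow> ('tr::finite) state"
  assumes run: "is_run dc dop dm \<rho>" and imm: "immediate dc dop dm \<rho> Controller"
begin

lemma nbr_r: "t \<ge> 0 \<Longrightarrow> \<exists>\<epsilon>>0. \<forall>u. t < u \<and> u < t + \<epsilon> \<longrightarrow> \<rho> u = rlim \<rho> t"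
  using prerun_r run unfolding is_run_def by blast

lemma nbr_l: "t > 0 \<Longrightarrow> \<exists>\<epsilon>>0. \<forall>u. t - \<epsilon> < u \<and> u < t \<longrightarrow> \<rho> u = llim \<rho> t"
  using prerun_l run unfolding is_run_def by blast

lemma step: "t \<ge> 0 \<Longrightarrow> rlim \<rho> t = \<rho> t \<or> (\<exists>M. rlim \<rho> t = exec_modules dc dop dm M t (\<rho> t))"
  using run unfolding is_run_def by blast

lemma ts_r: "t \<ge> 0 \<Longrightarrow> TrackStatus (rlim \<rho> t) = TrackStatus (\<rho> t)"
  using run unfolding is_run_def by metis

lemma left_int: "t > 0 \<Longrightarrow> Deadline (\<rho> t) = Deadline (llim \<rho> t) \<and> DirV (\<rho> t) = DirV (llim \<rho> t)"
  using run unfolding is_run_def only_external_differ_def by metis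

lemma fire: "t \<ge> 0 \<Longrightarrow> enabled dc dop dm Controller t (\<rho> t) \<Longrightarrow>
   \<exists>M. Controller \<in> M \<and> rlim \<rho> t = exec_modules dc dop dm M t (\<rho> t)"
  using imm unfolding immediate_def fires_def by blast

lemma enabled_ctrl: "enabled dc dop dm Controller u s \<longleftrightarrow>
   consistent (controller_updates dc dop dm u s) \<and> (\<exists>x\<in>controller_updates dc dop dm u s. changes x s)"
  unfolding enabled_def module_updates_def by simp

lemma const_not_enabled:
  assumes "t \<ge> 0" "\<epsilon> > 0" "\<forall>u. t < u \<and> u < t + \<epsilon> \<longrightarrow> \<rho> u = S" "t < u" "u < t + \<epsilon>"
  shows "\<not> enabled dc dop dm Controller u S"
proof
  assume en: "enabled dc dop dm Controller u S"
  have "\<rho> u = S" using assms by auto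
  have "rlim \<rho> u = S" 
    by (rule rlim_eq[of "t + \<epsilon> - u"]) (use assms in auto)
  moreover have "fires dc dop dm \<rho> Controller u" using imm en \<open>\<rho> u = S\<close> assms
    unfolding immediate_def by auto
  ultimately show False using \<open>\<rho> u = S\<close> unfolding fires_def by auto
qed

lemma generic_point:
  fixes S :: "('tr::finite) state"
  assumes "\<epsilon> > 0"
  shows "\<exists>u. t < u \<and> u < t + \<epsilon> \<and> (\<forall>y. ereal u \<noteq> Deadline S y)"
proof -
  have fin: "finite (real_of_ereal ` range (Deadline S))" by simp
  have "infinite {t<..<t+\<epsilon>}" using assms by simp
  then obtain u where u: "u \<in> {t<..<t+\<epsilon>}" "u \<notin> real_of_ereal ` range (Deadline S)"
    using fin by (metis finite_subset subsetI)
  have "\<forall>y. ereal u \<noteq> Deadline S y"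
  proof
    fix y show "ereal u \<noteq> Deadline S y"
    proof
      assume "ereal u = Deadline S y"
      then have "u = real_of_ereal (Deadline S y)" by (metis real_of_ereal.simps(1))
      then show False using u(2) by auto
    qed
  qed
  then show ?thesis using u(1) by auto
qed

lemma inv_state:
  assumes "t \<ge> 0" "\<epsilon> > 0" "\<forall>u. t < u \<and> u < t + \<epsilon> \<longrightarrow> \<rho> u = S"
  shows "(TrackStatus S y = Empty \<longrightarrow> Deadline S y = \<infinity>) \<and>
         (TrackStatus S y = Coming \<longrightarrow> Deadline S y \<noteq> \<infinity>)"
proof -
  obtain u where u: "t < u" "u < t + \<epsilon>" "\<forall>y. ereal u \<noteq> Deadline S y"
    using generic_point[OF assms(2)] by blast
  have ne: "\<not> enabled dc dop dm Controller u S" using const_not_enabled[OF assms u(1,2)] .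
  have cons: "consistent (controller_updates dc dop dm u S)" using ctrl_cons u(3) by blast
  have nc: "\<forall>x\<in>controller_updates dc dop dm u S. \<not> changes x S"
    using ne cons unfolding enabled_ctrl by blast
  show ?thesis
  proof (intro conjI impI)
    assume e: "TrackStatus S y = Empty"
    show "Deadline S y = \<infinity>"
    proof (rule ccontr)
      assume "Deadline S y \<noteq> \<infinity>"
      then have "UDL y \<infinity> \<in> controller_updates dc dop dm u S"
        using e unfolding controller_updates_def by (auto simp: less_top[symmetric])
      then show False using nc \<open>Deadline S y \<noteq> \<infinity>\<close> by force
    qed
  next
    assume e: "TrackStatus S y = Coming"
    show "Deadline S y \<noteq> \<infinity>"
    proof
      assume "Deadline S y = \<infinity>"
      then have "UDL y (ereal (u + (dm - dc))) \<in> controller_updates dc dop dm u S"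
        using e unfolding controller_updates_def by auto
      then show False using nc \<open>Deadline S y = \<infinity>\<close> by force
    qed
  qed
qed

lemma inv_r:
  assumes "t \<ge> 0"
  shows "(TrackStatus (rlim \<rho> t) y = Empty \<longrightarrow> Deadline (rlim \<rho> t) y = \<infinity>) \<and>
         (TrackStatus (rlim \<rho> t) y = Coming \<longrightarrow> Deadline (rlim \<rho> t) y \<noteq> \<infinity>)"
proof -
  obtain e where "e > 0" "\<forall>u. t < u \<and> u < t + e \<longrightarrow> \<rho> u = rlim \<rho> t" using nbr_r[OF assms] by auto
  then show ?thesis using inv_state[OF assms] by blast
qed

lemma inv_l:
  assumes "t > 0"
  shows "(TrackStatus (llim \<rho> t) y = Empty \<longrightarrow> Deadline (llim \<rho> t) y = \<infinity>) \<and>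
         (TrackStatus (llim \<rho> t) y = Coming \<longrightarrow> Deadline (llim \<rho> t) y \<noteq> \<infinity>)"
proof -
  obtain e where e: "e > 0" "\<forall>u. t - e < u \<and> u < t \<longrightarrow> \<rho> u = llim \<rho> t" using nbr_l[OF assms] by auto
  define u where "u = t - min e t / 2"
  have u: "u \<ge> 0" "u < t" "t - e < u" unfolding u_def using e assms by auto
  have "\<forall>v. u < v \<and> v < u + (t - u) \<longrightarrow> \<rho> v = llim \<rho> t" using e u by auto
  then show ?thesis using inv_state[OF u(1), of "t - u"] u by auto
qed


lemma D_keep_open:
  assumes "t \<ge> 0" "DirV (\<rho> t) = Open" "UDir Close \<notin> controller_updates dc dop dm t (\<rho> t)"
  shows "DirV (rlim \<rho> t) = Open"
  using step[OF assms(1)]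
proof
  assume "rlim \<rho> t = \<rho> t" then show ?thesis using assms by simp
next
  assume "\<exists>M. rlim \<rho> t = exec_modules dc dop dm M t (\<rho> t)"
  then obtain M where M: "rlim \<rho> t = exec_modules dc dop dm M t (\<rho> t)" by auto
  show ?thesis using exec_dir[of dc dop dm M t "\<rho> t"] assms M by (metis dir.exhaust)
qed

lemma D_keep_close:
  assumes "t \<ge> 0" "DirV (\<rho> t) = Close" "\<not> SafeToOpen dop t (\<rho> t)"
  shows "DirV (rlim \<rho> t) = Close"
  using step[OF assms(1)]
proof
  assume "rlim \<rho> t = \<rho> t" then show ?thesis using assms by simp
next
  assume "\<exists>M. rlim \<rho> t = exec_modules dc dop dm M t (\<rho> t)"
  then obtain M where M: "rlim \<rho> t = exec_modules dc dop dm M t (\<rho> t)" by auto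
  have "UDir Open \<notin> controller_updates dc dop dm t (\<rho> t)"
    using assms(3) unfolding controller_updates_def by auto
  then show ?thesis using exec_dir[of dc dop dm M t "\<rho> t"] assms M by (metis dir.exhaust)
qed

lemma D_close:
  assumes "t \<ge> 0" "UDir Close \<in> controller_updates dc dop dm t (\<rho> t)"
  shows "DirV (rlim \<rho> t) = Close"
proof (cases "consistent (controller_updates dc dop dm t (\<rho> t))")
  case False
  then have c: "DirV (\<rho> t) = Close" by (rule ctrl_incons)
  show ?thesis using step[OF assms(1)]
  proof
    assume "rlim \<rho> t = \<rho> t" then show ?thesis using c by simp
  next
    assume "\<exists>M. rlim \<rho> t = exec_modules dc dop dm M t (\<rho> t)"
    then obtain M where M: "rlim \<rho> t = exec_modules dc dop dm M t (\<rho> t)" by auto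
    then show ?thesis using exec_dir[of dc dop dm M t "\<rho> t"] c False by metis
  qed
next
  case True
  have uniq: "\<And>d. UDir d \<in> controller_updates dc dop dm t (\<rho> t) \<Longrightarrow> d = Close"
    using True assms(2) unfolding consistent_def by force
  show ?thesis
  proof (cases "DirV (\<rho> t) = Close")
    case c: True
    show ?thesis using step[OF assms(1)]
    proof
      assume "rlim \<rho> t = \<rho> t" then show ?thesis using c by simp
    next
      assume "\<exists>M. rlim \<rho> t = exec_modules dc dop dm M t (\<rho> t)"
      then obtain M where M: "rlim \<rho> t = exec_modules dc dop dm M t (\<rho> t)" by auto
      then show ?thesis using exec_dir[of dc dop dm M t "\<rho> t"] c uniq by metis
    qed
  next
    case False
    then have "enabled dc dop dm Controller t (\<rho> t)"
      unfolding enabled_ctrl using True assms(2) by force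
    then obtain M where M: "Controller \<in> M" "rlim \<rho> t = exec_modules dc dop dm M t (\<rho> t)"
      using fire[OF assms(1)] by blast
    then show ?thesis using exec_dir_ctrl[OF M(1) True assms(2)] by simp
  qed
qed

lemma D_open:
  assumes "t \<ge> 0" "DirV (\<rho> t) = Close" "SafeToOpen dop t (\<rho> t)"
    "\<forall>y. ereal t \<noteq> Deadline (\<rho> t) y"
  shows "DirV (rlim \<rho> t) = Open"
proof -
  have cons: "consistent (controller_updates dc dop dm t (\<rho> t))" using ctrl_cons assms(4) by blast
  have o: "UDir Open \<in> controller_updates dc dop dm t (\<rho> t)"
    using assms(2,3) unfolding controller_updates_def by auto
  then have "enabled dc dop dm Controller t (\<rho> t)"
    unfolding enabled_ctrl using cons assms(2) by force
  then obtain M where M: "Controller \<in> M" "rlim \<rho> t = exec_modules dc dop dm M t (\<rho> t)"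
    using fire[OF assms(1)] by blast
  then show ?thesis using exec_dir_ctrl[OF M(1) cons o] by simp
qed

lemma DL_keep:
  assumes "t \<ge> 0" "TrackStatus (\<rho> t) x \<noteq> Empty" "Deadline (\<rho> t) x \<noteq> \<infinity>"
  shows "Deadline (rlim \<rho> t) x = Deadline (\<rho> t) x"
  using step[OF assms(1)]
proof
  assume "rlim \<rho> t = \<rho> t" then show ?thesis by simp
next
  assume "\<exists>M. rlim \<rho> t = exec_modules dc dop dm M t (\<rho> t)"
  then obtain M where M: "rlim \<rho> t = exec_modules dc dop dm M t (\<rho> t)" by auto
  have "\<And>v. UDL x v \<notin> controller_updates dc dop dm t (\<rho> t)"
    using assms(2,3) unfolding controller_updates_def by auto
  then show ?thesis using exec_dl[of dc dop dm M t "\<rho> t" x] M by metis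
qed

lemma DL_set:
  assumes "t \<ge> 0" "TrackStatus (\<rho> t) x = Coming" "Deadline (\<rho> t) x = \<infinity>"
  shows "Deadline (rlim \<rho> t) x = ereal (t + (dm - dc))"
proof -
  have "TrackStatus (rlim \<rho> t) x = Coming" using ts_r[OF assms(1)] assms(2) by simp
  then have ninf: "Deadline (rlim \<rho> t) x \<noteq> \<infinity>" using inv_r[OF assms(1), of x] by simp
  show ?thesis using step[OF assms(1)]
  proof
    assume "rlim \<rho> t = \<rho> t" then show ?thesis using ninf assms by simp
  next
    assume "\<exists>M. rlim \<rho> t = exec_modules dc dop dm M t (\<rho> t)"
    then obtain M where M: "rlim \<rho> t = exec_modules dc dop dm M t (\<rho> t)" by auto
    have "\<And>v. UDL x v \<in> controller_updates dc dop dm t (\<rho> t) \<Longrightarrow> v = ereal (t + (dm - dc))"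
      using assms(2,3) unfolding controller_updates_def by auto
    then show ?thesis using exec_dl[of dc dop dm M t "\<rho> t" x] M ninf assms(3) by metis
  qed
qed


lemma unbounded:
  assumes sm: "strict_mono (ts :: nat \<Rightarrow> real)" and t0: "ts 0 = 0"
    and seg: "\<forall>i. seg_ok dm dM \<rho> x ts i"
  shows "\<exists>j. \<alpha> < ts j"
proof (rule ccontr)
  assume "\<not> (\<exists>j. \<alpha> < ts j)"
  then have bd: "\<forall>j. ts j \<le> \<alpha>" by (auto simp: not_less)
  define \<sigma> where "\<sigma> = Sup (range ts)"
  have bdd: "bdd_above (range ts)" using bd by (auto intro: bdd_aboveI)
  have up: "\<And>j. ts j \<le> \<sigma>" unfolding \<sigma>_def using bdd by (auto intro: cSup_upper)
  have lt: "\<And>j. ts j < \<sigma>"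
  proof -
    fix j
    have "ts j < ts (Suc j)" using sm by (simp add: strict_mono_less)
    then show "ts j < \<sigma>" using up[of "Suc j"] by simp
  qed
  have "0 < \<sigma>" using lt[of 0] t0 by simp
  then obtain e where e: "e > 0" "\<forall>u. \<sigma> - e < u \<and> u < \<sigma> \<longrightarrow> \<rho> u = llim \<rho> \<sigma>"
    using nbr_l by blast
  have "\<exists>j. \<sigma> - e < ts j"
  proof (rule ccontr)
    assume "\<not> (\<exists>j. \<sigma> - e < ts j)"
    then have "\<forall>j. ts j \<le> \<sigma> - e" by (auto simp: not_less)
    then have "\<sigma> \<le> \<sigma> - e" unfolding \<sigma>_def by (intro cSup_least) auto
    then show False using e by simp
  qed
  then obtain j where j: "\<sigma> - e < ts j" by auto
  have "ts j \<le> ts (3*j+1)" using sm by (simp add: strict_mono_less_eq)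
  have sj: "seg_ok dm dM \<rho> x ts j" using seg by simp
  have a1: "ts (3*j+1) < ts (3*j+2)" using sm by (simp add: strict_mono_less)
  have a2: "ts (3*j+2) < ts (3*j+3)" using sm by (simp add: strict_mono_less)
  have "TrackStatus (\<rho> (ts (3*j+1))) x = Coming" using seg_okD(2)[OF sj] a1 by simp
  moreover have "TrackStatus (\<rho> (ts (3*j+2))) x = Incrossing" using seg_okD(4)[OF sj] a2 by simp
  moreover have "\<rho> (ts (3*j+1)) = llim \<rho> \<sigma>" using e j \<open>ts j \<le> ts (3*j+1)\<close> lt by auto
  moreover have "\<rho> (ts (3*j+2)) = llim \<rho> \<sigma>" using e j \<open>ts j \<le> ts (3*j+1)\<close> a1 lt by auto
  ultimately show False by simp
qed

lemma tm:
  assumes tmo: "train_motion dm dM \<rho>" and dm: "0 < dm" and al: "0 < \<alpha>" and dl: "\<delta> > 0"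
    and ne: "\<forall>u. \<alpha> - \<delta> < u \<and> u < \<alpha> \<longrightarrow> TrackStatus (\<rho> u) x \<noteq> Empty"
    and em: "TrackStatus (\<rho> \<alpha>) x = Empty"
  shows "\<exists>a c. 0 \<le> a \<and> a < c \<and> c + dm \<le> \<alpha> \<and>
     (\<forall>u. a \<le> u \<and> u < c \<longrightarrow> TrackStatus (\<rho> u) x = Empty) \<and>
     (\<forall>u. c \<le> u \<and> u < \<alpha> \<longrightarrow> TrackStatus (\<rho> u) x \<noteq> Empty) \<and>
     TrackStatus (\<rho> c) x = Coming"
proof -
  obtain ts :: "nat \<Rightarrow> real" where t0: "ts 0 = 0" and disj:
     "(strict_mono ts \<and> (\<forall>i. seg_ok dm dM \<rho> x ts i))
      \<or> (\<exists>k. 3 dvd k \<and> (\<forall>i<k. ts i < ts (Suc i)) \<and>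
             (\<forall>i. 3*i+3 \<le> k \<longrightarrow> seg_ok dm dM \<rho> x ts i) \<and>
             (\<forall>u. ts k \<le> u \<longrightarrow> TrackStatus (\<rho> u) x = Empty))"
    using tmo[unfolded train_motion_def, rule_format, of x] by (elim exE conjE) (rule that)
  from disj show ?thesis
  proof
    assume inf: "strict_mono ts \<and> (\<forall>i. seg_ok dm dM \<rho> x ts i)"
    obtain j where "\<alpha> < ts j" using unbounded[of ts dM x \<alpha>] inf t0 by (elim conjE) blast
    then obtain m where m: "m < j" "ts m \<le> \<alpha>" "\<alpha> < ts (Suc m)"
      using locate_r[of ts \<alpha> j] t0 al by auto
    show ?thesis
    proof (rule tm_core[where \<rho>=\<rho> and x=x and ts=ts and \<alpha>=\<alpha> and \<delta>=\<delta> and dm=dm, OF dm al dl ne em t0, of "m+3" dM m])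
      show "\<forall>j<m+3. ts j < ts (Suc j)" using inf by (simp add: strict_mono_less)
      show "\<forall>i. 3*i+3 \<le> m+3 \<longrightarrow> seg_ok dm dM \<rho> x ts i" using inf by simp
      show "m \<le> m+3" by simp
      show "ts m \<le> \<alpha>" by (rule m(2))
      show "m < m+3 \<longrightarrow> \<alpha> < ts (Suc m)" using m(3) by simp
      show "m < m+3 \<longrightarrow> 3*(m div 3)+3 \<le> m+3" by simp
      show "m = m+3 \<longrightarrow> 3 dvd (m+3) \<and> (\<forall>u. ts (m+3) \<le> u \<longrightarrow> TrackStatus (\<rho> u) x = Empty)" by simp
    qed
  next
    assume "\<exists>k. 3 dvd k \<and> (\<forall>i<k. ts i < ts (Suc i)) \<and>
             (\<forall>i. 3*i+3 \<le> k \<longrightarrow> seg_ok dm dM \<rho> x ts i) \<and>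
             (\<forall>u. ts k \<le> u \<longrightarrow> TrackStatus (\<rho> u) x = Empty)"
    then obtain k where k: "3 dvd k" "\<forall>i<k. ts i < ts (Suc i)"
      "\<forall>i. 3*i+3 \<le> k \<longrightarrow> seg_ok dm dM \<rho> x ts i"
      "\<forall>u. ts k \<le> u \<longrightarrow> TrackStatus (\<rho> u) x = Empty" by blast
    show ?thesis
    proof (cases "\<alpha> < ts k")
      case True
      then obtain m where m: "m < k" "ts m \<le> \<alpha>" "\<alpha> < ts (Suc m)"
        using locate_r[of ts \<alpha> k] t0 al by auto
      obtain k' where "k = 3*k'" using k(1) by blast
      then have "m div 3 < k'" using m(1) by (simp add: div_less_iff_less_mult mult.commute)
      then have "3*(m div 3)+3 \<le> k" using \<open>k = 3*k'\<close> by linarith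
      show ?thesis
        by (rule tm_core[where \<rho>=\<rho> and x=x and ts=ts and \<alpha>=\<alpha> and \<delta>=\<delta> and dm=dm, OF dm al dl ne em t0 k(2) k(3), of m]) (use m \<open>3*(m div 3)+3 \<le> k\<close> in auto)
    next
      case False
      show ?thesis
        by (rule tm_core[where \<rho>=\<rho> and x=x and ts=ts and \<alpha>=\<alpha> and \<delta>=\<delta> and dm=dm, OF dm al dl ne em t0 k(2) k(3), of k]) (use k False in auto)
    qed
  qed
qed


lemma left_pick:
  assumes "v > 0" "\<epsilon> > 0" "\<forall>u. v - \<epsilon> < u \<and> u < v \<longrightarrow> P (\<rho> u)"
  shows "P (llim \<rho> v)"
proof -
  obtain e where e: "e > 0" "\<forall>u. v - e < u \<and> u < v \<longrightarrow> \<rho> u = llim \<rho> v" using nbr_l[OF assms(1)] by auto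
  define u where "u = v - min e \<epsilon> / 2"
  have "\<rho> u = llim \<rho> v" using e assms unfolding u_def by (intro e(2)[rule_format]) auto
  moreover have "P (\<rho> u)" using e assms unfolding u_def by (intro assms(3)[rule_format]) auto
  ultimately show ?thesis by simp
qed

lemma dlhist:
  assumes tmo: "train_motion dm dM \<rho>" and dpos: "0 < dc" "dc < dm" and al: "0 < \<alpha>" and dl: "\<delta> > 0"
    and ne: "\<forall>u. \<alpha> - \<delta> < u \<and> u < \<alpha> \<longrightarrow> TrackStatus (\<rho> u) x \<noteq> Empty"
    and em: "TrackStatus (\<rho> \<alpha>) x = Empty"
  shows "\<exists>c. 0 < c \<and> c + dm \<le> \<alpha> \<and>
     (\<forall>s. c < s \<and> s < \<alpha> \<longrightarrow> Deadline (\<rho> s) x = ereal (c + (dm - dc)) \<and> TrackStatus (\<rho> s) x \<noteq> Empty)"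
proof -
  have dm: "0 < dm" using dpos by simp
  obtain a c where ac: "0 \<le> a" "a < c" "c + dm \<le> \<alpha>"
     "\<forall>u. a \<le> u \<and> u < c \<longrightarrow> TrackStatus (\<rho> u) x = Empty"
     "\<forall>u. c \<le> u \<and> u < \<alpha> \<longrightarrow> TrackStatus (\<rho> u) x \<noteq> Empty"
     "TrackStatus (\<rho> c) x = Coming"
    using tm[OF tmo dm al dl ne em] by blast
  have c0: "c > 0" using ac by simp
  define D where "D = ereal (c + (dm - dc))"
  have "TrackStatus (llim \<rho> c) x = Empty"
    using left_pick[OF c0, of "c - a" "\<lambda>S. TrackStatus S x = Empty"] ac by auto
  then have "Deadline (llim \<rho> c) x = \<infinity>" using inv_l[OF c0] by blast
  then have "Deadline (\<rho> c) x = \<infinity>" using left_int[OF c0] by simp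
  then have Dc: "Deadline (rlim \<rho> c) x = D" unfolding D_def using DL_set ac(6) c0 by simp
  obtain e where e: "e > 0" "\<forall>u. c < u \<and> u < c + e \<longrightarrow> \<rho> u = rlim \<rho> c" using nbr_r[of c] c0 by auto
  have P: "Deadline (\<rho> s) x = D" if s: "c < s" "s < \<alpha>" for s
  proof (cases "s < c + e")
    case True then show ?thesis using e s Dc by simp
  next
    case False
    define c1 where "c1 = c + e/2"
    have c1: "c < c1" "c1 < c + e" "c1 \<le> s" using e False unfolding c1_def by auto
    have "\<forall>v. c1 \<le> v \<and> v \<le> s \<longrightarrow> Deadline (\<rho> v) x = D"
    proof (rule interval_induct)
      show "c1 \<le> s" by fact
      show "Deadline (\<rho> c1) x = D" using e c1 Dc by simp
    next
      fix v assume v: "c1 \<le> v" "v < s" "Deadline (\<rho> v) x = D"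
      have v0: "v \<ge> 0" using v c1 c0 by simp
      have "TrackStatus (\<rho> v) x \<noteq> Empty" using ac(5) v c1 s by simp
      then have "Deadline (rlim \<rho> v) x = D" using DL_keep[OF v0] v(3) unfolding D_def by simp
      then show "\<exists>\<epsilon>>0. \<forall>u. v < u \<and> u < v + \<epsilon> \<longrightarrow> Deadline (\<rho> u) x = D"
        using nbr_r[OF v0] by force
    next
      fix v assume v: "c1 < v" "v \<le> s" "\<exists>\<epsilon>>0. \<forall>u. v - \<epsilon> < u \<and> u < v \<longrightarrow> Deadline (\<rho> u) x = D"
      have v0: "v > 0" using v c1 c0 by simp
      obtain \<epsilon> where "\<epsilon> > 0" "\<forall>u. v - \<epsilon> < u \<and> u < v \<longrightarrow> Deadline (\<rho> u) x = D" using v(3) by blast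
      then have "Deadline (llim \<rho> v) x = D" using left_pick[OF v0, of \<epsilon> "\<lambda>S. Deadline S x = D"] by blast
      then show "Deadline (\<rho> v) x = D" using left_int[OF v0] by simp
    qed
    then show ?thesis using c1 by simp
  qed
  show ?thesis
    using P ac c0 unfolding D_def by (intro exI[of _ c]) auto
qed

end


theorem mainTheorem7:
  fixes d_close d_open d_min d_max :: real
    and \<rho> :: "real \<Rightarrow> ('tr::finite) state"
    and \<alpha> :: real
  assumes dpos: "0 < d_close" "0 < d_open" "0 < d_min" "0 < d_max"
      "d_close < d_min" "d_min \<le> d_max"
    and reg: "regular_run d_close d_open d_min d_max \<rho>"
    and alpha_pos: "0 < \<alpha>"
    and fails_before: "\<exists>\<epsilon>>0. \<forall>u. \<alpha> - \<epsilon> < u \<and> u < \<alpha> \<longrightarrow> \<not> SafeToOpen d_open u (\<rho> u)"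
    and holds_at: "SafeToOpen d_open \<alpha> (\<rho> \<alpha>)"
  defines "\<beta> \<equiv> Sup {ereal t | t. \<alpha> \<le> t \<and>
                    (\<forall>u. \<alpha> \<le> u \<and> u \<le> t \<longrightarrow> SafeToOpen d_open u (\<rho> u))}"
  shows "DirV (\<rho> \<alpha>) = Close \<and>
         (\<forall>t. \<alpha> < t \<and> ereal t \<le> \<beta> \<longrightarrow> DirV (\<rho> t) = Open) \<and>
         (\<beta> \<noteq> \<infinity> \<longrightarrow> (\<exists>\<epsilon>>0. \<forall>u. real_of_ereal \<beta> < u \<and> u < real_of_ereal \<beta> + \<epsilon> \<longrightarrow>
                                   DirV (\<rho> u) = Open))"
proof -
  have run: "is_run d_close d_open d_min \<rho>" and tmo: "train_motion d_min d_max \<rho>"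
    and imm: "immediate d_close d_open d_min \<rho> Controller"
    using reg unfolding regular_run_def by auto
  interpret R: RR d_close d_open d_min \<rho> using run imm by unfold_locales
  define L where "L = llim \<rho> \<alpha>"
  obtain \<epsilon>0 where e0: "\<epsilon>0 > 0" "\<forall>u. \<alpha> - \<epsilon>0 < u \<and> u < \<alpha> \<longrightarrow> \<not> SafeToOpen d_open u (\<rho> u)"
    using fails_before by auto
  obtain \<delta> where dl: "\<delta> > 0" "\<forall>u. \<alpha> - \<delta> < u \<and> u < \<alpha> \<longrightarrow> \<rho> u = L"
    using R.nbr_l[OF alpha_pos] unfolding L_def by auto
  define u0 where "u0 = \<alpha> - min \<epsilon>0 \<delta> / 2"
  have u0: "\<alpha> - \<delta> < u0" "u0 < \<alpha>" "\<alpha> - \<epsilon>0 < u0" unfolding u0_def using e0 dl by auto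
  have "\<not> SafeToOpen d_open u0 L" using e0 dl u0 by auto
  then obtain x where x: "TrackStatus L x \<noteq> Empty" "\<not> ereal (u0 + d_open) < Deadline L x"
    unfolding SafeToOpen_def safe_track_def by auto
  have DLa: "Deadline (\<rho> \<alpha>) = Deadline L" "DirV (\<rho> \<alpha>) = DirV L"
    using R.left_int[OF alpha_pos] unfolding L_def by auto
  have nex: "\<forall>u. \<alpha> - (\<alpha> - u0) < u \<and> u < \<alpha> \<longrightarrow> TrackStatus (\<rho> u) x \<noteq> Empty"
    using dl u0 x by auto
  have emx: "TrackStatus (\<rho> \<alpha>) x = Empty"
  proof -
    have "safe_track d_open \<alpha> (\<rho> \<alpha>) x" using holds_at unfolding SafeToOpen_def by auto
    moreover have "\<not> ereal (\<alpha> + d_open) < Deadline L x"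
    proof
      assume "ereal (\<alpha> + d_open) < Deadline L x"
      moreover have "ereal (u0 + d_open) < ereal (\<alpha> + d_open)" using u0 by simp
      ultimately show False using x(2) by (meson order.strict_trans not_le order.trans less_imp_le)
    qed
    ultimately show ?thesis unfolding safe_track_def using DLa by auto
  qed
  obtain c where c: "0 < c" "c + d_min \<le> \<alpha>"
     "\<forall>s. c < s \<and> s < \<alpha> \<longrightarrow> Deadline (\<rho> s) x = ereal (c + (d_min - d_close)) \<and> TrackStatus (\<rho> s) x \<noteq> Empty"
    using R.dlhist[OF tmo dpos(1) dpos(5) alpha_pos _ nex emx] u0 by auto
  define Dt where "Dt = c + (d_min - d_close)"
  have Dt: "c < Dt" "Dt < \<alpha>" using c dpos unfolding Dt_def by auto
  have "Deadline (\<rho> Dt) x = ereal Dt" using c(3) Dt unfolding Dt_def by auto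
  then have "UDir Close \<in> controller_updates d_close d_open d_min Dt (\<rho> Dt)"
    unfolding controller_updates_def by (auto intro!: exI[of _ x])
  then have DirDt: "DirV (rlim \<rho> Dt) = Close" using R.D_close Dt c(1) by simp
  obtain e where e: "e > 0" "\<forall>u. Dt < u \<and> u < Dt + e \<longrightarrow> \<rho> u = rlim \<rho> Dt"
    using R.nbr_r[of Dt] Dt c(1) by auto
  have Q: "DirV (\<rho> s) = Close" if s: "Dt < s" "s < \<alpha>" for s
  proof (cases "s < Dt + e")
    case True then show ?thesis using e s DirDt by simp
  next
    case False
    define c1 where "c1 = Dt + e/2"
    have c1: "Dt < c1" "c1 < Dt + e" "c1 \<le> s" using e False unfolding c1_def by auto
    have "\<forall>v. c1 \<le> v \<and> v \<le> s \<longrightarrow> DirV (\<rho> v) = Close"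
    proof (rule interval_induct)
      show "c1 \<le> s" by fact
      show "DirV (\<rho> c1) = Close" using e c1 DirDt by simp
    next
      fix v assume v: "c1 \<le> v" "v < s" "DirV (\<rho> v) = Close"
      have v0: "v \<ge> 0" using v c1 Dt c(1) by simp
      have "\<not> SafeToOpen d_open v (\<rho> v)"
      proof -
        have "c < v \<and> v < \<alpha>" using v c1 s Dt by linarith
        then have "TrackStatus (\<rho> v) x \<noteq> Empty" "Deadline (\<rho> v) x = ereal Dt"
          using c(3) unfolding Dt_def by auto
        moreover have "\<not> ereal (v + d_open) < ereal Dt" using v c1 dpos by simp
        ultimately show ?thesis unfolding SafeToOpen_def safe_track_def by auto
      qed
      then have "DirV (rlim \<rho> v) = Close" using R.D_keep_close[OF v0 v(3)] by simp
      then show "\<exists>\<epsilon>>0. \<forall>u. v < u \<and> u < v + \<epsilon> \<longrightarrow> DirV (\<rho> u) = Close"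
        using R.nbr_r[OF v0] by force
    next
      fix v assume v: "c1 < v" "v \<le> s" "\<exists>\<epsilon>>0. \<forall>u. v - \<epsilon> < u \<and> u < v \<longrightarrow> DirV (\<rho> u) = Close"
      have v0: "v > 0" using v c1 Dt c(1) by simp
      obtain \<epsilon> where "\<epsilon> > 0" "\<forall>u. v - \<epsilon> < u \<and> u < v \<longrightarrow> DirV (\<rho> u) = Close" using v(3) by blast
      then have "DirV (llim \<rho> v) = Close" using R.left_pick[OF v0, of \<epsilon> "\<lambda>S. DirV S = Close"] by blast
      then show "DirV (\<rho> v) = Close" using R.left_int[OF v0] by simp
    qed
    then show ?thesis using c1 s by simp
  qed
  have "DirV L = Close"
    using R.left_pick[OF alpha_pos, of "\<alpha> - Dt" "\<lambda>S. DirV S = Close"] Q Dt unfolding L_def by auto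
  then have part1: "DirV (\<rho> \<alpha>) = Close" using DLa by simp
  have noDLa: "\<forall>y. ereal \<alpha> \<noteq> Deadline (\<rho> \<alpha>) y"
  proof (intro allI notI)
    fix y assume eq: "ereal \<alpha> = Deadline (\<rho> \<alpha>) y"
    then have eqL: "Deadline L y = ereal \<alpha>" using DLa by simp
    have "TrackStatus L y \<noteq> Empty" using R.inv_l[OF alpha_pos, of y] eqL unfolding L_def by auto
    then have ney: "\<forall>u. \<alpha> - \<delta> < u \<and> u < \<alpha> \<longrightarrow> TrackStatus (\<rho> u) y \<noteq> Empty" using dl by auto
    have "safe_track d_open \<alpha> (\<rho> \<alpha>) y" using holds_at unfolding SafeToOpen_def by auto
    moreover have "\<not> ereal (\<alpha> + d_open) < Deadline (\<rho> \<alpha>) y" using eq[symmetric] dpos by simp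
    ultimately have emy: "TrackStatus (\<rho> \<alpha>) y = Empty" unfolding safe_track_def by auto
    obtain cy where cy: "0 < cy" "cy + d_min \<le> \<alpha>"
       "\<forall>s. cy < s \<and> s < \<alpha> \<longrightarrow> Deadline (\<rho> s) y = ereal (cy + (d_min - d_close)) \<and> TrackStatus (\<rho> s) y \<noteq> Empty"
      using R.dlhist[OF tmo dpos(1) dpos(5) alpha_pos dl(1) ney emy] by auto
    have "Deadline L y = ereal (cy + (d_min - d_close))"
      using R.left_pick[OF alpha_pos, of "\<alpha> - cy" "\<lambda>S. Deadline S y = ereal (cy + (d_min - d_close))"] cy dpos
      unfolding L_def by auto
    then show False using eqL cy dpos by simp
  qed
  have DirA: "DirV (rlim \<rho> \<alpha>) = Open" using R.D_open[OF _ part1 holds_at noDLa] alpha_pos by simp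
  obtain ea where ea: "ea > 0" "\<forall>u. \<alpha> < u \<and> u < \<alpha> + ea \<longrightarrow> \<rho> u = rlim \<rho> \<alpha>"
    using R.nbr_r[of \<alpha>] alpha_pos by auto
  define S where "S = {ereal t | t. \<alpha> \<le> t \<and> (\<forall>u. \<alpha> \<le> u \<and> u \<le> t \<longrightarrow> SafeToOpen d_open u (\<rho> u))}"
  have bS: "\<beta> = Sup S" unfolding \<beta>_def S_def by simp
  have safe: "SafeToOpen d_open u (\<rho> u)" if th: "\<alpha> \<le> u" "ereal u < \<beta>" for u
  proof -
    obtain z where "z \<in> S" "ereal u < z" using th(2) unfolding bS less_Sup_iff by auto
    then show ?thesis using th(1) unfolding S_def by auto
  qed
  have noclose: "\<forall>y. ereal s \<noteq> Deadline (\<rho> s) y" if s: "\<alpha> < s" "ereal s \<le> \<beta>" for s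
  proof (intro allI notI)
    fix y assume eq: "ereal s = Deadline (\<rho> s) y"
    have s0: "s > 0" using s alpha_pos by simp
    have eqL: "Deadline (llim \<rho> s) y = ereal s" using eq R.left_int[OF s0] by simp
    have ne: "TrackStatus (llim \<rho> s) y \<noteq> Empty" using R.inv_l[OF s0, of y] eqL by auto
    obtain e' where e': "e' > 0" "\<forall>u. s - e' < u \<and> u < s \<longrightarrow> \<rho> u = llim \<rho> s" using R.nbr_l[OF s0] by auto
    define mm where "mm = min e' (min (s - \<alpha>) d_open)"
    have mm: "mm > 0" "mm \<le> e'" "mm \<le> s - \<alpha>" "mm \<le> d_open" unfolding mm_def using e' s dpos by auto
    define u where "u = s - mm / 2"
    have u: "s - e' < u" "u < s" "\<alpha> \<le> u" "s - d_open < u" unfolding u_def using mm by auto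
    have "\<rho> u = llim \<rho> s" using e' u by auto
    moreover have "ereal u < ereal s" using u by simp
    then have "ereal u < \<beta>" using s(2) by (rule less_le_trans)
    ultimately have "SafeToOpen d_open u (llim \<rho> s)" using safe u by metis
    then have "ereal (u + d_open) < ereal s" using ne eqL unfolding SafeToOpen_def safe_track_def by metis
    then show False using u by simp
  qed
  have openp: "DirV (\<rho> s) = Open" if s: "\<alpha> < s" "ereal s \<le> \<beta>" for s
  proof (cases "s < \<alpha> + ea")
    case True then show ?thesis using ea s DirA by simp
  next
    case False
    define c1 where "c1 = \<alpha> + ea/2"
    have c1: "\<alpha> < c1" "c1 < \<alpha> + ea" "c1 \<le> s" using ea False unfolding c1_def by auto
    have "\<forall>v. c1 \<le> v \<and> v \<le> s \<longrightarrow> DirV (\<rho> v) = Open"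
    proof (rule interval_induct)
      show "c1 \<le> s" by fact
      show "DirV (\<rho> c1) = Open" using ea c1 DirA by simp
    next
      fix v assume v: "c1 \<le> v" "v < s" "DirV (\<rho> v) = Open"
      have v0: "v \<ge> 0" using v c1 alpha_pos by simp
      have "ereal v \<le> ereal s" using v by simp
      then have "ereal v \<le> \<beta>" using s(2) by (rule order_trans)
      then have "\<forall>y. ereal v \<noteq> Deadline (\<rho> v) y" using noclose v c1 by simp
      then have "UDir Close \<notin> controller_updates d_close d_open d_min v (\<rho> v)"
        unfolding controller_updates_def by auto
      then have "DirV (rlim \<rho> v) = Open" using R.D_keep_open[OF v0 v(3)] by simp
      then show "\<exists>\<epsilon>>0. \<forall>u. v < u \<and> u < v + \<epsilon> \<longrightarrow> DirV (\<rho> u) = Open"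
        using R.nbr_r[OF v0] by force
    next
      fix v assume v: "c1 < v" "v \<le> s" "\<exists>\<epsilon>>0. \<forall>u. v - \<epsilon> < u \<and> u < v \<longrightarrow> DirV (\<rho> u) = Open"
      have v0: "v > 0" using v c1 alpha_pos by simp
      obtain \<epsilon> where "\<epsilon> > 0" "\<forall>u. v - \<epsilon> < u \<and> u < v \<longrightarrow> DirV (\<rho> u) = Open" using v(3) by blast
      then have "DirV (llim \<rho> v) = Open" using R.left_pick[OF v0, of \<epsilon> "\<lambda>S. DirV S = Open"] by blast
      then show "DirV (\<rho> v) = Open" using R.left_int[OF v0] by simp
    qed
    then show ?thesis using c1 s by simp
  qed
  have part3: "\<exists>\<epsilon>>0. \<forall>u. real_of_ereal \<beta> < u \<and> u < real_of_ereal \<beta> + \<epsilon> \<longrightarrow> DirV (\<rho> u) = Open"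
    if fin: "\<beta> \<noteq> \<infinity>"
  proof -
    have "ereal \<alpha> \<in> S" unfolding S_def using holds_at by auto
    then have ab: "ereal \<alpha> \<le> \<beta>" unfolding bS by (rule Sup_upper)
    then obtain b where b: "\<beta> = ereal b" using fin by (cases \<beta>) auto
    have ba: "\<alpha> \<le> b" using ab b by simp
    show ?thesis
    proof (cases "b = \<alpha>")
      case True
      then show ?thesis using ea DirA b by auto
    next
      case False
      then have ba': "\<alpha> < b" using ba by simp
      have b0: "b \<ge> 0" using ba alpha_pos by simp
      have "DirV (\<rho> b) = Open" using openp ba' b by simp
      moreover have "\<forall>y. ereal b \<noteq> Deadline (\<rho> b) y" using noclose ba' b by simp
      then have "UDir Close \<notin> controller_updates d_close d_open d_min b (\<rho> b)"
        unfolding controller_updates_def by auto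
      ultimately have "DirV (rlim \<rho> b) = Open" using R.D_keep_open[OF b0] by simp
      then show ?thesis using R.nbr_r[OF b0] b by force
    qed
  qed
  show ?thesis using part1 openp part3 by blast
qed

end
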